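(* Let $e=(B,X,M,A,X)$ be an idempotent of $\mathbb M$ with $e\notin\{\mathbf0,\mathbf1\}$, let $(B,X)[\overline z]$ be a reachable term of $\overline{\mathcal G}$, and let $z_e\in\overline I^*$ with $\varphi(z_e)=e$. Then $L_\emptyset((B,X)[z_e\overline z])\subseteq\ \downarrow L_\emptyset((B,X)[\overline z])$.
   Context: Let $\mathcal{G}=(N,T,I,P,S)$ be an indexed grammar: $N$ (non-terminals), $T$ (terminals), $I$ (stack symbols) finite pairwise disjoint alphabets, $S\in N$, and productions of the forms $A\to w$ ($w\in T^*$), $A\to BC$, $A\to Bf$, $Af\to B$ ($A,B,C\in N$, $f\in I$). Terms $A[z]$ ($A\in N$, $z\in I^*$ the stack, top on the left; $A$ means $A[\varepsilon]$); sentential forms are words over terms and terminals; derivation: $uA[z]v\Rightarrow uB[z]C[z]v$ if $A\to BC\in P$; $uA[z]v\Rightarrow uB[fz]v$ if $A\to Bf\in P$; $uA[fz]v\Rightarrow uB[z]v$ if $Af\to B\in P$; $uA[z]v\Rightarrow uwv$ if $A\to w\in P$, $w\in T^*$; $\Rightarrow^*$ is the reflexive transitive closure; $\downarrow L$ is the set of scattered subwords of words in $L$. For $X\subseteq N$, $z\in I^*$: $z\cdot X=\{A\in N:\exists u\in(X\cup T)^*, A[z]\Rightarrow^*u\}$ (non-terminals in $u$ with empty stack); $\mathrm{Useful}=\{A:\exists w\in T^*, A\Rightarrow^*w\}$; assume $S\in\mathrm{Useful}$. The annotated version $\overline{\mathcal G}$ has non-terminals $\overline N=\{(A,X)\in N\times2^N:A\in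 X\}$, stack symbols $\overline I=I\times 2^N$, start $(S,\mathrm{Useful})$, and productions: $(A,X)\to w$ for $A\to w\in P$, $A\in X$; $(A,X)\to(B,X)(C,X)$ for $A\to BC\in P$, $A,B,C\in X$; $(A,X)\to(B,Y)(f,X)$ for $A\to Bf\in P$ with $Y=f\cdot X$, $A\in X$, $B\in Y$; $(A,Y)(f,X)\to(B,X)$ for $Af\to B\in P$ with $Y=f\cdot X$, $A\in Y$, $B\in X$. A term of $\overline{\mathcal G}$ is reachable if it occurs in some sentential form $u$ with $(S,\mathrm{Useful})\Rightarrow^*_{\overline{\mathcal G}}u$. For a sentential form $u$ of $\overline{\mathcal G}$, $L_\emptyset(u)=\{w\in T^*:u\Rightarrow^*_{\overline{\mathcal G}}w\}$. Assume every $f\in I$ occurs in some production $A\to Bf$ and there are functions $\alpha,\beta:I\to N$ such that every production $A\to Bf$ in $P$ satisfies $A=\alpha(f)$, $B=\beta(f)$. For $X\subseteq N$, $A\,\mathcal R_X\,B$ holds iff $A,B\in X$ and $(A,X)\Rightarrow^*_{\overline{\mathcal G}}u\,(B,X)\,v$ for some sentential forms $u,v$ of $\overline{\mathcal G}$. The stack monoid $\mathbb M$ has elements: all tuples $(B,Y,M,A,X)$ with $A,B\in N$, $X,Y\subseteq N$, $M\in\mathbb B^{N\times N}$ (Boolean matrices, product over $(\vee,\wedge)$), plus a neutral element $\mathbf 1$ and an absorbing element $\mathbf 0$; product $(B_2,Y_2,M_2,A_2,X_2)\cdot(B_1,Y_1,M_1,A_1,X_1)=(B_2,Y_2,M_1M_2,A_1,X_1)$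 if $X_2=Y_1$ and $B_1\,\mathcal R_{X_2}\,A_2$, and $\mathbf 0$ otherwise. $\varphi:\overline I^*\to\mathbb M$ is the monoid morphism with $\varphi(f,X)=(\beta(f),f\cdot X,M_{f,X},\alpha(f),X)$, where $M_{f,X}(A,B)=\top$ iff $A[f]\Rightarrow^*_{\mathcal G}uBv$ for some $u,v\in(X\cup T)^*$. An element $e$ is idempotent if $e\cdot e=e$. *)

theory Defs
  imports Main "HOL-Library.Sublist"
begin

text \<open>Productions: A -> w, A -> B C, A -> B f (push), A f -> B (pop).\<close>
datatype ('n,'t,'i) prod =
    TermP 'n "'t list"
  | BinP 'n 'n 'n
  | PushP 'n 'n 'i
  | PopP 'n 'i 'n

text \<open>Symbols of sentential forms: terminals, and terms A[z] (stack z, top on the left).\<close>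
datatype ('n,'t,'i) sym = Tm 't | NT 'n "'i list"

datatype ('n,'t,'i) ig = IG
  (nts: "'n set") (tms: "'t set") (stk: "'i set")
  (prods: "('n,'t,'i) prod set") (start: 'n)

definition prod_ok :: "('n,'t,'i) ig \<Rightarrow> ('n,'t,'i) prod \<Rightarrow> bool" where
  "prod_ok G p = (case p of
      TermP A w \<Rightarrow> A \<in> nts G \<and> set w \<subseteq> tms G
    | BinP A B C \<Rightarrow> A \<in> nts G \<and> B \<in> nts G \<and> C \<in> nts G
    | PushP A B f \<Rightarrow> A \<in> nts G \<and> B \<in> nts G \<and> f \<in> stk G
    | PopP A f B \<Rightarrow> A \<in> nts G \<and> B \<in> nts G \<and> f \<in> stk G)"

text \<open>Well-formed indexed grammar (disjointness of alphabets is automatic by typing).\<close>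
definition wf_ig :: "('n,'t,'i) ig \<Rightarrow> bool" where
  "wf_ig G = (finite (nts G) \<and> finite (tms G) \<and> finite (stk G) \<and> start G \<in> nts G
      \<and> (\<forall>p \<in> prods G. prod_ok G p))"

inductive step :: "('n,'t,'i) ig \<Rightarrow> ('n,'t,'i) sym list \<Rightarrow> ('n,'t,'i) sym list \<Rightarrow> bool"
  for G where
  step_bin: "BinP A B C \<in> prods G \<Longrightarrow>
        step G (u @ [NT A z] @ v) (u @ [NT B z, NT C z] @ v)"
| step_push: "PushP A B f \<in> prods G \<Longrightarrow>
        step G (u @ [NT A z] @ v) (u @ [NT B (f # z)] @ v)"
| step_pop: "PopP A f B \<in> prods G \<Longrightarrow>
        step G (u @ [NT A (f # z)] @ v) (u @ [NT B z] @ v)"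
| step_term: "TermP A w \<in> prods G \<Longrightarrow>
        step G (u @ [NT A z] @ v) (u @ map Tm w @ v)"

definition derives :: "('n,'t,'i) ig \<Rightarrow> ('n,'t,'i) sym list \<Rightarrow> ('n,'t,'i) sym list \<Rightarrow> bool" where
  "derives G = (step G)\<^sup>*\<^sup>*"

text \<open>u \<in> (X \<union> T)*: terminals of G and nonterminals of X with empty stack.\<close>
definition over :: "('n,'t,'i) ig \<Rightarrow> 'n set \<Rightarrow> ('n,'t,'i) sym list \<Rightarrow> bool" where
  "over G X u = (\<forall>s \<in> set u. case s of Tm a \<Rightarrow> a \<in> tms G | NT B z \<Rightarrow> z = [] \<and> B \<in> X)"

definition act :: "('n,'t,'i) ig \<Rightarrow> 'i list \<Rightarrow> 'n set \<Rightarrow> 'n set" where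
  "act G z X = {A \<in> nts G. \<exists>u. derives G [NT A z] u \<and> over G X u}"

definition Useful :: "('n,'t,'i) ig \<Rightarrow> 'n set" where
  "Useful G = {A \<in> nts G. \<exists>w. set w \<subseteq> tms G \<and> derives G [NT A []] (map Tm w)}"

definition annot_prods :: "('n,'t,'i) ig \<Rightarrow> ('n \<times> 'n set, 't, 'i \<times> 'n set) prod set" where
  "annot_prods G =
     {TermP (A,X) w | A X w. TermP A w \<in> prods G \<and> X \<subseteq> nts G \<and> A \<in> X}
   \<union> {BinP (A,X) (B,X) (C,X) | A B C X. BinP A B C \<in> prods G \<and> X \<subseteq> nts G
        \<and> A \<in> X \<and> B \<in> X \<and> C \<in> X}
   \<union> {PushP (A,X) (B, act G [f] X) (f,X) | A B f X. PushP A B f \<in> prods G \<and> X \<subseteq> nts G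
        \<and> A \<in> X \<and> B \<in> act G [f] X}
   \<union> {PopP (A, act G [f] X) (f,X) (B,X) | A B f X. PopP A f B \<in> prods G \<and> X \<subseteq> nts G
        \<and> A \<in> act G [f] X \<and> B \<in> X}"

definition annot :: "('n,'t,'i) ig \<Rightarrow> ('n \<times> 'n set, 't, 'i \<times> 'n set) ig" where
  "annot G = IG {(A,X). X \<subseteq> nts G \<and> A \<in> X} (tms G) (stk G \<times> Pow (nts G))
                 (annot_prods G) (start G, Useful G)"

definition reachable :: "('n,'t,'i) ig \<Rightarrow> 'n \<Rightarrow> 'i list \<Rightarrow> bool" where
  "reachable G A z = (\<exists>u. derives G [NT (start G) []] u \<and> NT A z \<in> set u)"

definition Lempty :: "('n,'t,'i) ig \<Rightarrow> ('n,'t,'i) sym list \<Rightarrow> 't list set" where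
  "Lempty G u = {w. set w \<subseteq> tms G \<and> derives G u (map Tm w)}"

definition downclose :: "'a list set \<Rightarrow> 'a list set" where
  "downclose L = {w. \<exists>v \<in> L. subseq w v}"

definition RX :: "('n,'t,'i) ig \<Rightarrow> 'n set \<Rightarrow> 'n \<Rightarrow> 'n \<Rightarrow> bool" where
  "RX G X A B = (A \<in> X \<and> B \<in> X \<and>
     (\<exists>u v. derives (annot G) [NT (A,X) []] (u @ [NT (B,X) []] @ v)))"

text \<open>Elements: neutral One, absorbing Zero, tuples (B,Y,M,A,X) with M a Boolean N x N matrix.\<close>
datatype 'n mon = One | Zero | El 'n "'n set" "'n \<Rightarrow> 'n \<Rightarrow> bool" 'n "'n set"

definition matmul :: "'n set \<Rightarrow> ('n \<Rightarrow> 'n \<Rightarrow> bool) \<Rightarrow> ('n \<Rightarrow> 'n \<Rightarrow> bool) \<Rightarrow> ('n \<Rightarrow> 'n \<Rightarrow> bool)" where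
  "matmul N M1 M2 = (\<lambda>A C. \<exists>B \<in> N. M1 A B \<and> M2 B C)"

fun mmult :: "('n,'t,'i) ig \<Rightarrow> 'n mon \<Rightarrow> 'n mon \<Rightarrow> 'n mon" where
  "mmult G One x = x"
| "mmult G (El b y m a x) One = El b y m a x"
| "mmult G Zero _ = Zero"
| "mmult G (El b y m a x) Zero = Zero"
| "mmult G (El B2 Y2 M2 A2 X2) (El B1 Y1 M1 A1 X1) =
     (if X2 = Y1 \<and> RX G X2 B1 A2 then El B2 Y2 (matmul (nts G) M1 M2) A1 X1 else Zero)"

definition Mfx :: "('n,'t,'i) ig \<Rightarrow> 'i \<Rightarrow> 'n set \<Rightarrow> 'n \<Rightarrow> 'n \<Rightarrow> bool" where
  "Mfx G f X A B = (A \<in> nts G \<and> B \<in> nts G \<and>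
     (\<exists>u v. over G X u \<and> over G X v \<and> derives G [NT A [f]] (u @ [NT B []] @ v)))"

definition phi1 :: "('n,'t,'i) ig \<Rightarrow> ('i \<Rightarrow> 'n) \<Rightarrow> ('i \<Rightarrow> 'n) \<Rightarrow> 'i \<times> 'n set \<Rightarrow> 'n mon" where
  "phi1 G \<alpha> \<beta> fX = (case fX of (f, X) \<Rightarrow> El (\<beta> f) (act G [f] X) (Mfx G f X) (\<alpha> f) X)"

text \<open>The monoid morphism on words (top of stack on the left).\<close>
fun phi :: "('n,'t,'i) ig \<Rightarrow> ('i \<Rightarrow> 'n) \<Rightarrow> ('i \<Rightarrow> 'n) \<Rightarrow> ('i \<times> 'n set) list \<Rightarrow> 'n mon" where
  "phi G \<alpha> \<beta> [] = One"
| "phi G \<alpha> \<beta> (x # xs) = mmult G (phi1 G \<alpha> \<beta> x) (phi G \<alpha> \<beta> xs)"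

end

theory Submission
  imports Defs
begin

definition rstep :: "('n,'t,'i) ig \<Rightarrow> ('n,'t,'i) sym \<Rightarrow> ('n,'t,'i) sym list \<Rightarrow> bool" where
  "rstep G x r = ((\<exists>A B C z. BinP A B C \<in> prods G \<and> x = NT A z \<and> r = [NT B z, NT C z])
    \<or> (\<exists>A B f z. PushP A B f \<in> prods G \<and> x = NT A z \<and> r = [NT B (f#z)])
    \<or> (\<exists>A f B z. PopP A f B \<in> prods G \<and> x = NT A (f#z) \<and> r = [NT B z])
    \<or> (\<exists>A w z. TermP A w \<in> prods G \<and> x = NT A z \<and> r = map Tm w))"

lemma step_iff1: "step G a b \<Longrightarrow> (\<exists>p x q r. rstep G x r \<and> a = p @ x # q \<and> b = p @ r @ q)"
proof (induct rule: step.induct)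
  case (step_bin A B C u z v)
  then have r: "rstep G (NT A z) [NT B z, NT C z]" unfolding rstep_def by blast
  show ?case by (rule exI[of _ u], rule exI, rule exI[of _ v], rule exI, rule conjI[OF r]) simp
next
  case (step_push A B f u z v)
  then have r: "rstep G (NT A z) [NT B (f#z)]" unfolding rstep_def by blast
  show ?case by (rule exI[of _ u], rule exI, rule exI[of _ v], rule exI, rule conjI[OF r]) simp
next
  case (step_pop A f B u z v)
  then have r: "rstep G (NT A (f#z)) [NT B z]" unfolding rstep_def by blast
  show ?case by (rule exI[of _ u], rule exI, rule exI[of _ v], rule exI, rule conjI[OF r]) simp
next
  case (step_term A w u z v)
  then have r: "rstep G (NT A z) (map Tm w)" unfolding rstep_def by blast
  show ?case by (rule exI[of _ u], rule exI, rule exI[of _ v], rule exI, rule conjI[OF r]) simp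
qed

lemma step_iff2: "rstep G x r \<Longrightarrow> step G (p @ x # q) (p @ r @ q)"
  unfolding rstep_def
  using step_bin[of _ _ _ G p _ q] step_push[of _ _ _ G p _ q]
      step_pop[of _ _ _ G p _ q] step_term[of _ _ G p _ q]
  by auto

lemma step_iff: "step G a b \<longleftrightarrow> (\<exists>p x q r. rstep G x r \<and> a = p @ x # q \<and> b = p @ r @ q)"
  using step_iff1 step_iff2 by metis

lemma rstep_NT: "rstep G x r \<Longrightarrow> \<exists>A z. x = NT A z"
  unfolding rstep_def by auto

lemma derives_refl[simp]: "derives G u u" by (simp add: derives_def)

lemma derives_trans: "derives G u v \<Longrightarrow> derives G v w \<Longrightarrow> derives G u w"
  by (simp add: derives_def)

lemma derives_rstep: "rstep G x r \<Longrightarrow> derives G [x] r"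
  unfolding derives_def using step_iff[of G "[x]" r] by force

lemma step_append1: "step G a a' \<Longrightarrow> step G (a @ b) (a' @ b)"
  unfolding step_iff by fastforce

lemma step_append2: "step G b b' \<Longrightarrow> step G (a @ b) (a @ b')"
  unfolding step_iff by (metis append.assoc append_Cons)

lemma derives_append1: "derives G a a' \<Longrightarrow> derives G (a @ b) (a' @ b)"
  unfolding derives_def
  by (induct rule: rtranclp_induct) (auto intro: rtranclp.rtrancl_into_rtrancl step_append1)

lemma derives_append2: "derives G b b' \<Longrightarrow> derives G (a @ b) (a @ b')"
  unfolding derives_def
  by (induct rule: rtranclp_induct) (auto intro: rtranclp.rtrancl_into_rtrancl step_append2)

lemma derives_append: "derives G a a' \<Longrightarrow> derives G b b' \<Longrightarrow> derives G (a @ b) (a' @ b')"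
  by (meson derives_append1 derives_append2 derives_trans)

fun apps :: "'i list \<Rightarrow> ('n,'t,'i) sym \<Rightarrow> ('n,'t,'i) sym" where
  "apps s (Tm a) = Tm a"
| "apps s (NT A z) = NT A (z @ s)"

lemma apps_Nil[simp]: "apps [] x = x" by (cases x) auto
lemma map_apps_Nil[simp]: "map (apps []) u = u" by (induct u) auto
lemma map_apps_Tm[simp]: "map (apps s) (map Tm w) = map Tm w" by (induct w) auto

lemma apps_Tm[simp]: "apps s \<circ> Tm = Tm" by (rule ext) simp

lemma rstep_apps: "rstep G x r \<Longrightarrow> rstep G (apps s x) (map (apps s) r)"
  unfolding rstep_def by (elim disjE exE conjE) auto

lemma step_apps: "step G u v \<Longrightarrow> step G (map (apps s) u) (map (apps s) v)"
  unfolding step_iff using rstep_apps by fastforce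

lemma derives_apps: "derives G u v \<Longrightarrow> derives G (map (apps s) u) (map (apps s) v)"
  unfolding derives_def
  by (induct rule: rtranclp_induct) (auto intro: rtranclp.rtrancl_into_rtrancl step_apps)

lemma comb:
  assumes "\<forall>x\<in>set v. \<exists>u. derives G [x] u \<and> over H W u"
  shows "\<exists>u. derives G v u \<and> over H W u"
  using assms
proof (induct v)
  case Nil then show ?case by (intro exI[of _ "[]"]) (auto simp: over_def)
next
  case (Cons x v)
  then obtain u1 u2 where "derives G [x] u1" "over H W u1" "derives G v u2" "over H W u2" by auto
  then show ?case using derives_append[of G "[x]" u1 v u2]
    by (intro exI[of _ "u1 @ u2"]) (auto simp: over_def)
qed

inductive dt :: "('n,'t,'i) ig \<Rightarrow> 'n \<Rightarrow> 'i list \<Rightarrow> ('n,'t,'i) sym list \<Rightarrow> bool" for G where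
  dt_refl: "dt G A z [NT A z]"
| dt_bin: "BinP A B C \<in> prods G \<Longrightarrow> dt G B z ua \<Longrightarrow> dt G C z ub \<Longrightarrow> dt G A z (ua @ ub)"
| dt_push: "PushP A B f \<in> prods G \<Longrightarrow> dt G B (f # z) u \<Longrightarrow> dt G A z u"
| dt_pop: "PopP A f B \<in> prods G \<Longrightarrow> dt G B z u \<Longrightarrow> dt G A (f # z) u"
| dt_term: "TermP A w \<in> prods G \<Longrightarrow> dt G A z (map Tm w)"

lemma dt_derives: "dt G A z u \<Longrightarrow> derives G [NT A z] u"
proof (induct rule: dt.induct)
  case (dt_bin A B C z u1 u2)
  have "rstep G (NT A z) [NT B z, NT C z]" using dt_bin(1) by (auto simp: rstep_def)
  then have "derives G [NT A z] ([NT B z] @ [NT C z])" using derives_rstep by fastforce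
  then show ?case using derives_append dt_bin derives_trans by metis
next
  case (dt_push A B f z u)
  have "rstep G (NT A z) [NT B (f#z)]" using dt_push(1) by (auto simp: rstep_def)
  then show ?case using derives_rstep dt_push derives_trans by metis
next
  case (dt_pop A f B z u)
  have "rstep G (NT A (f#z)) [NT B z]" using dt_pop(1) by (auto simp: rstep_def)
  then show ?case using derives_rstep dt_pop derives_trans by metis
next
  case (dt_term A w z)
  have "rstep G (NT A z) (map Tm w)" using dt_term(1) by (auto simp: rstep_def)
  then show ?case using derives_rstep by metis
qed simp

lemma app_split: "u1 @ u2 = p @ x # q \<Longrightarrow>
   (\<exists>q1. u1 = p @ x # q1 \<and> q = q1 @ u2) \<or> (\<exists>p2. p = u1 @ p2 \<and> u2 = p2 @ x # q)"
proof (induct u1 arbitrary: p)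
  case Nil then show ?case by auto
next
  case (Cons a u1)
  then show ?case by (cases p) auto
qed

lemma dt_rstep: "dt G A z v \<Longrightarrow> rstep G x r \<Longrightarrow> v = p @ x # q \<Longrightarrow> dt G A z (p @ r @ q)"
proof (induct arbitrary: p q rule: dt.induct)
  case (dt_refl A z)
  from dt_refl(2) have e: "p = []" "q = []" "x = NT A z" by (cases p; simp)+
  from dt_refl(1) show ?case unfolding rstep_def
  proof (elim disjE exE conjE)
    fix A' B C z' assume "BinP A' B C \<in> prods G" "x = NT A' z'" "r = [NT B z', NT C z']"
    then show ?thesis using e dt.dt_bin[where G=G and A=A and B=B and C=C and z=z and ua="[NT B z]" and ub="[NT C z]"] by (simp add: dt.dt_refl)
  next
    fix A' B f z' assume "PushP A' B f \<in> prods G" "x = NT A' z'" "r = [NT B (f#z')]"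
    then show ?thesis using e dt.dt_push[where G=G and A=A and B=B and f=f and z=z and u="[NT B (f#z)]"] by (simp add: dt.dt_refl)
  next
    fix A' f B z' assume "PopP A' f B \<in> prods G" "x = NT A' (f#z')" "r = [NT B z']"
    then show ?thesis using e dt.dt_pop[where G=G and A=A and B=B and f=f and z=z' and u="[NT B z']"] by (simp add: dt.dt_refl)
  next
    fix A' w z' assume "TermP A' w \<in> prods G" "x = NT A' z'" "r = map Tm w"
    then show ?thesis using e dt.dt_term[where G=G and A=A and w=w and z=z] by simp
  qed
next
  case (dt_bin A B C z u1 u2)
  from app_split[OF dt_bin.prems(2)] show ?case
  proof
    assume "\<exists>q1. u1 = p @ x # q1 \<and> q = q1 @ u2"
    then obtain q1 where "u1 = p @ x # q1" "q = q1 @ u2" by blast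
    with dt_bin have "dt G B z (p @ r @ q1)" by blast
    with dt_bin(1,4) \<open>q = q1 @ u2\<close> show ?thesis using dt.dt_bin[where ua="p @ r @ q1" and ub=u2] by simp
  next
    assume "\<exists>p2. p = u1 @ p2 \<and> u2 = p2 @ x # q"
    then obtain p2 where "p = u1 @ p2" "u2 = p2 @ x # q" by blast
    with dt_bin have "dt G C z (p2 @ r @ q)" by blast
    with dt_bin(1,2) \<open>p = u1 @ p2\<close> show ?thesis using dt.dt_bin[where ua=u1 and ub="p2 @ r @ q"] by simp
  qed
next
  case (dt_push A B f z u)
  show ?case by (rule dt.dt_push[OF dt_push(1) dt_push(3)[OF dt_push(4) dt_push(5)]])
next
  case (dt_pop A f B z u)
  show ?case by (rule dt.dt_pop[OF dt_pop(1) dt_pop(3)[OF dt_pop(4) dt_pop(5)]])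
next
  case (dt_term A w z)
  then obtain C y where "x = NT C y" using rstep_NT by blast
  then have "x \<in> set (map Tm w)" using dt_term(3) by simp
  then show ?case using \<open>x = NT C y\<close> by auto
qed

lemma derives_dt: "derives G [NT A z] u \<Longrightarrow> dt G A z u"
  unfolding derives_def
proof (induct rule: rtranclp_induct)
  case base then show ?case by (rule dt_refl)
next
  case (step y u)
  from step(2) obtain p x q r where "rstep G x r" "y = p @ x # q" "u = p @ r @ q"
    unfolding step_iff by blast
  then show ?case using dt_rstep[OF step(3)] by blast
qed


fun actw :: "('n,'t,'i) ig \<Rightarrow> 'i list \<Rightarrow> 'n set \<Rightarrow> 'n set" where
  "actw G [] X = X"
| "actw G (g # z) X = act G [g] (actw G z X)"

fun ann :: "('n,'t,'i) ig \<Rightarrow> 'i list \<Rightarrow> 'n set \<Rightarrow> ('i \<times> 'n set) list" where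
  "ann G [] X = []"
| "ann G (g # z) X = (g, actw G z X) # ann G z X"

fun liftS :: "'n set \<Rightarrow> ('n,'t,'i) sym \<Rightarrow> ('n \<times> 'n set, 't, 'i \<times> 'n set) sym" where
  "liftS X (Tm a) = Tm a"
| "liftS X (NT C y) = NT (C, X) []"

lemma liftS_Tm[simp]: "liftS X \<circ> Tm = Tm" by (rule ext) simp
lemma map_liftS_Tm[simp]: "map (liftS X) (map Tm w) = map Tm w" by simp

lemma act_sub: "act G z X \<subseteq> nts G" by (auto simp: act_def)
lemma actw_sub: "X \<subseteq> nts G \<Longrightarrow> actw G z X \<subseteq> nts G" by (cases z) (auto simp: act_sub)
lemma act_intro: "A \<in> nts G \<Longrightarrow> derives G [NT A z] u \<Longrightarrow> over G X u \<Longrightarrow> A \<in> act G z X"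
  by (auto simp: act_def)
lemma prods_annot[simp]: "prods (annot G) = annot_prods G" by (simp add: annot_def)
lemma tms_annot[simp]: "tms (annot G) = tms G" by (simp add: annot_def)
lemma start_annot[simp]: "start (annot G) = (start G, Useful G)" by (simp add: annot_def)

lemma wf_prod: "wf_ig G \<Longrightarrow> p \<in> prods G \<Longrightarrow> prod_ok G p"
  by (auto simp: wf_ig_def)

lemma over_Tm: "set w \<subseteq> tms G \<Longrightarrow> over G X (map Tm w)" by (auto simp: over_def)

lemma over_append[simp]: "over G X (u @ v) \<longleftrightarrow> over G X u \<and> over G X v"
  by (auto simp: over_def)

lemma act_close1:
  assumes "A \<in> nts G" "\<And>y. derives G [NT A y] (map (apps y) v)" "over G (act G [h] W) v"
  shows "A \<in> act G [h] W"
proof -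
  have "\<forall>x\<in>set (map (apps [h]) v). \<exists>u. derives G [x] u \<and> over G W u"
  proof
    fix x assume "x \<in> set (map (apps [h]) v)"
    then obtain x0 where x0: "x0 \<in> set v" "x = apps [h] x0" by auto
    show "\<exists>u. derives G [x] u \<and> over G W u"
    proof (cases x0)
      case (Tm a) then have "a \<in> tms G" using assms(3) x0(1) by (auto simp: over_def)
      then show ?thesis using x0 Tm by (intro exI[of _ "[x]"]) (auto simp: over_def)
    next
      case (NT C y) then have "y = []" "C \<in> act G [h] W" using assms(3) x0(1) by (auto simp: over_def)
      then show ?thesis using x0 NT by (auto simp: act_def)
    qed
  qed
  then obtain u where u: "derives G (map (apps [h]) v) u" "over G W u" using comb by blast
  then have "derives G [NT A [h]] u" using assms(2)[of "[h]"] derives_trans by fastforce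
  then show ?thesis by (rule act_intro[OF assms(1) _ u(2)])
qed

lemma actw_close:
  assumes "A \<in> nts G" "act G [] X \<subseteq> X" "\<And>y. derives G [NT A y] (map (apps y) v)"
    "over G (actw G z X) v"
  shows "A \<in> actw G z X"
proof (cases z)
  case Nil
  then have "over G X v" using assms(4) by simp
  with assms(3)[of "[]"] assms(1) have "A \<in> act G [] X" using act_intro by (metis map_apps_Nil)
  with assms(2) Nil show ?thesis by auto
next
  case (Cons h z')
  then show ?thesis using act_close1[OF assms(1,3)] assms(4) by simp
qed

lemma lift:
  assumes "dt G A z u" and wf: "wf_ig G" and Xn: "X \<subseteq> nts G" and cl: "act G [] X \<subseteq> X"
    and "over G X u"
  shows "A \<in> actw G z X \<and> derives (annot G) [NT (A, actw G z X) (ann G z X)] (map (liftS X) u)"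
  using assms(1,5)
proof (induct rule: dt.induct)
  case (dt_refl A z)
  then have "z = []" "A \<in> X" by (auto simp: over_def)
  then show ?case by simp
next
  case (dt_bin A B C z u1 u2)
  let ?W = "actw G z X"
  have o1: "over G X u1" "over G X u2" using dt_bin.prems by auto
  have IH1: "B \<in> ?W" "derives (annot G) [NT (B,?W) (ann G z X)] (map (liftS X) u1)"
    using dt_bin(3) o1 by auto
  have IH2: "C \<in> ?W" "derives (annot G) [NT (C,?W) (ann G z X)] (map (liftS X) u2)"
    using dt_bin(5) o1 by auto
  have An: "A \<in> nts G" using wf_prod[OF wf dt_bin(1)] by (simp add: prod_ok_def)
  have AW: "A \<in> ?W"
  proof (rule actw_close[where v="[NT B [], NT C []]", OF An cl])
    fix y
    have "rstep G (NT A y) [NT B y, NT C y]" using dt_bin(1) by (auto simp: rstep_def)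
    then show "derives G [NT A y] (map (apps y) [NT B [], NT C []])"
      using derives_rstep by fastforce
  next
    show "over G ?W [NT B [], NT C []]" using IH1 IH2 by (simp add: over_def)
  qed
  have Wn: "?W \<subseteq> nts G" using actw_sub[OF Xn] .
  have "BinP (A,?W) (B,?W) (C,?W) \<in> annot_prods G"
    using dt_bin(1) Wn AW IH1(1) IH2(1) unfolding annot_prods_def by blast
  then have "rstep (annot G) (NT (A,?W) (ann G z X))
      ([NT (B,?W) (ann G z X)] @ [NT (C,?W) (ann G z X)])"
    by (auto simp: rstep_def)
  then have "derives (annot G) [NT (A,?W) (ann G z X)]
      ([NT (B,?W) (ann G z X)] @ [NT (C,?W) (ann G z X)])"
    by (rule derives_rstep)
  then have "derives (annot G) [NT (A,?W) (ann G z X)] (map (liftS X) u1 @ map (liftS X) u2)"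
    using derives_append[OF IH1(2) IH2(2)] derives_trans by blast
  then show ?case using AW by simp
next
  case (dt_push A B f z u)
  let ?W = "actw G z X"
  have IH: "B \<in> act G [f] ?W"
    "derives (annot G) [NT (B, act G [f] ?W) ((f,?W) # ann G z X)] (map (liftS X) u)"
    using dt_push(3) dt_push.prems by auto
  have An: "A \<in> nts G" using wf_prod[OF wf dt_push(1)] by (simp add: prod_ok_def)
  obtain v where v: "derives G [NT B [f]] v" "over G ?W v" using IH(1) by (auto simp: act_def)
  have AW: "A \<in> ?W"
  proof (rule actw_close[where v=v, OF An cl _ v(2)])
    fix y
    have "rstep G (NT A y) [NT B (f # y)]" using dt_push(1) by (auto simp: rstep_def)
    then have "derives G [NT A y] [NT B (f # y)]" by (rule derives_rstep)
    moreover have "derives G [NT B (f # y)] (map (apps y) v)"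
      using derives_apps[OF v(1), of y] by simp
    ultimately show "derives G [NT A y] (map (apps y) v)" by (rule derives_trans)
  qed
  have Wn: "?W \<subseteq> nts G" using actw_sub[OF Xn] .
  have "PushP (A,?W) (B, act G [f] ?W) (f, ?W) \<in> annot_prods G"
    using dt_push(1) Wn AW IH(1) unfolding annot_prods_def by blast
  then have "rstep (annot G) (NT (A,?W) (ann G z X)) [NT (B, act G [f] ?W) ((f,?W) # ann G z X)]"
    by (auto simp: rstep_def)
  then have "derives (annot G) [NT (A,?W) (ann G z X)] [NT (B, act G [f] ?W) ((f,?W) # ann G z X)]"
    by (rule derives_rstep)
  then show ?case using AW IH(2) derives_trans by fastforce
next
  case (dt_pop A f B z u)
  let ?W = "actw G z X"
  have IH: "B \<in> ?W" "derives (annot G) [NT (B, ?W) (ann G z X)] (map (liftS X) u)"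
    using dt_pop(3) dt_pop.prems by auto
  have An: "A \<in> nts G" using wf_prod[OF wf dt_pop(1)] by (simp add: prod_ok_def)
  have "rstep G (NT A [f]) [NT B []]" using dt_pop(1) by (auto simp: rstep_def)
  then have "derives G [NT A [f]] [NT B []]" by (rule derives_rstep)
  then have AW: "A \<in> act G [f] ?W" using act_intro[OF An] IH(1) by (auto simp: over_def)
  have Wn: "?W \<subseteq> nts G" using actw_sub[OF Xn] .
  have "PopP (A, act G [f] ?W) (f, ?W) (B, ?W) \<in> annot_prods G"
    using dt_pop(1) Wn AW IH(1) unfolding annot_prods_def by blast
  then have "rstep (annot G) (NT (A, act G [f] ?W) ((f,?W) # ann G z X)) [NT (B, ?W) (ann G z X)]"
    by (auto simp: rstep_def)
  then have "derives (annot G) [NT (A, act G [f] ?W) ((f,?W) # ann G z X)] [NT (B, ?W) (ann G z X)]"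
    by (rule derives_rstep)
  then show ?case using AW IH(2) derives_trans by fastforce
next
  case (dt_term A w z)
  let ?W = "actw G z X"
  have An: "A \<in> nts G" and wt: "set w \<subseteq> tms G"
    using wf_prod[OF wf dt_term(1)] by (auto simp: prod_ok_def)
  have AW: "A \<in> ?W"
  proof (rule actw_close[where v="map Tm w", OF An cl])
    fix y
    have "rstep G (NT A y) (map Tm w)" using dt_term(1) by (auto simp: rstep_def)
    then show "derives G [NT A y] (map (apps y) (map Tm w))" using derives_rstep by fastforce
  next
    show "over G ?W (map Tm w)" using over_Tm[OF wt] .
  qed
  have Wn: "?W \<subseteq> nts G" using actw_sub[OF Xn] .
  have "TermP (A,?W) w \<in> annot_prods G"
    using dt_term(1) Wn AW unfolding annot_prods_def by blast
  then have "rstep (annot G) (NT (A,?W) (ann G z X)) (map Tm w)"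
    by (auto simp: rstep_def)
  then show ?case using AW derives_rstep by fastforce
qed


lemma over_empty: "over G {} u \<Longrightarrow> \<exists>w. u = map Tm w \<and> set w \<subseteq> tms G"
proof (induct u)
  case Nil then show ?case by simp
next
  case (Cons x u)
  then obtain w where w: "u = map Tm w" "set w \<subseteq> tms G" by (auto simp: over_def)
  from Cons.prems obtain a where "x = Tm a" "a \<in> tms G"
    by (cases x) (auto simp: over_def)
  then show ?case using w by (intro exI[of _ "a # w"]) simp
qed

lemma act_nil_Useful: "act G [] (Useful G) \<subseteq> Useful G"
proof
  fix A assume "A \<in> act G [] (Useful G)"
  then obtain u where A: "A \<in> nts G" "derives G [NT A []] u" "over G (Useful G) u"
    by (auto simp: act_def)
  have "\<forall>x\<in>set u. \<exists>u'. derives G [x] u' \<and> over G {} u'"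
  proof
    fix x assume x: "x \<in> set u"
    show "\<exists>u'. derives G [x] u' \<and> over G {} u'"
    proof (cases x)
      case (Tm a) then have "a \<in> tms G" using A(3) x by (auto simp: over_def)
      then show ?thesis using Tm by (intro exI[of _ "[x]"]) (auto simp: over_def)
    next
      case (NT C y) then have "y = []" "C \<in> Useful G" using A(3) x by (auto simp: over_def)
      then obtain w where "set w \<subseteq> tms G" "derives G [NT C []] (map Tm w)"
        by (auto simp: Useful_def)
      then show ?thesis using NT \<open>y = []\<close> over_Tm by blast
    qed
  qed
  then obtain u' where "derives G u u'" "over G {} u'" using comb by blast
  then obtain w where "u' = map Tm w" "set w \<subseteq> tms G" using over_empty by blast
  then show "A \<in> Useful G" using A \<open>derives G u u'\<close> derives_trans unfolding Useful_def by blast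
qed

lemma act_nil_act: "act G [] (act G [f] X) \<subseteq> act G [f] X"
proof
  fix A assume "A \<in> act G [] (act G [f] X)"
  then obtain u where A: "A \<in> nts G" "derives G [NT A []] u" "over G (act G [f] X) u"
    by (auto simp: act_def)
  show "A \<in> act G [f] X"
  proof (rule act_close1[OF A(1) _ A(3)])
    fix y show "derives G [NT A y] (map (apps y) u)"
      using derives_apps[OF A(2), of y] by simp
  qed
qed

fun stk_ok :: "('n,'t,'i) ig \<Rightarrow> 'n set \<Rightarrow> ('i \<times> 'n set) list \<Rightarrow> bool" where
  "stk_ok G Y [] = (Y = Useful G)"
| "stk_ok G Y (fX # s) = (Y = act G [fst fX] (snd fX) \<and> snd fX \<subseteq> nts G \<and> stk_ok G (snd fX) s)"

lemma Useful_sub: "Useful G \<subseteq> nts G" by (auto simp: Useful_def)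

lemma stk_ok_closed: "stk_ok G Y s \<Longrightarrow> act G [] Y \<subseteq> Y \<and> Y \<subseteq> nts G"
proof (cases s)
  case Nil
  assume "stk_ok G Y s"
  then show ?thesis using Nil act_nil_Useful[of G] Useful_sub[of G] by simp
next
  case (Cons fX s')
  assume "stk_ok G Y s"
  then show ?thesis using Cons act_nil_act[of G "fst fX" "snd fX"] act_sub[of G] by simp
qed

lemma productive:
  assumes wf: "wf_ig G"
  shows "stk_ok G Y s \<Longrightarrow> A \<in> Y \<Longrightarrow> \<exists>u. derives (annot G) [NT (A,Y) s] u \<and> over (annot G) {} u"
proof (induct s arbitrary: A Y)
  case Nil
  then have Y: "Y = Useful G" by simp
  with Nil.prems(2) obtain w where w: "set w \<subseteq> tms G" "derives G [NT A []] (map Tm w)"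
    by (auto simp: Useful_def)
  have cl: "act G [] (Useful G) \<subseteq> Useful G" "Useful G \<subseteq> nts G"
    using act_nil_Useful[of G] Useful_sub[of G] by auto
  have "derives (annot G) [NT (A, Useful G) []] (map Tm w)"
    using lift[OF derives_dt[OF w(2)] wf cl(2) cl(1) over_Tm[OF w(1)]] by simp
  moreover have "over (annot G) {} (map Tm w)" using w(1) by (auto simp: over_def)
  ultimately show ?case using Y by blast
next
  case (Cons fX s)
  obtain f X where fX: "fX = (f, X)" by (cases fX)
  have Y: "Y = act G [f] X" and Xn: "X \<subseteq> nts G" and ok: "stk_ok G X s"
    using Cons.prems(1) fX by auto
  have cl: "act G [] X \<subseteq> X" using stk_ok_closed[OF ok] by blast
  obtain u where u: "derives G [NT A [f]] u" "over G X u" using Cons.prems(2) Y by (auto simp: act_def)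
  have "derives (annot G) [NT (A, act G [f] X) [(f, X)]] (map (liftS X) u)"
    using lift[OF derives_dt[OF u(1)] wf Xn cl u(2)] by simp
  from derives_apps[OF this, of s]
  have d: "derives (annot G) [NT (A, Y) (fX # s)] (map (apps s) (map (liftS X) u))"
    using Y fX by simp
  have "\<forall>x\<in>set (map (apps s) (map (liftS X) u)). \<exists>u'. derives (annot G) [x] u' \<and> over (annot G) {} u'"
  proof
    fix x assume "x \<in> set (map (apps s) (map (liftS X) u))"
    then obtain x0 where x0: "x0 \<in> set u" "x = apps s (liftS X x0)" by auto
    show "\<exists>u'. derives (annot G) [x] u' \<and> over (annot G) {} u'"
    proof (cases x0)
      case (Tm a) then have "a \<in> tms G" using u(2) x0(1) by (auto simp: over_def)
      then show ?thesis using x0 Tm by (intro exI[of _ "[x]"]) (auto simp: over_def)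
    next
      case (NT C y) then have "y = []" "C \<in> X" using u(2) x0(1) by (auto simp: over_def)
      then show ?thesis using x0 NT Cons.hyps[OF ok] by simp
    qed
  qed
  then obtain u' where "derives (annot G) (map (apps s) (map (liftS X) u)) u'" "over (annot G) {} u'"
    using comb by blast
  then show ?case using d derives_trans by blast
qed

fun good :: "('n,'t,'i) ig \<Rightarrow> ('n \<times> 'n set, 't, 'i \<times> 'n set) sym \<Rightarrow> bool" where
  "good G (Tm a) = (a \<in> tms G)"
| "good G (NT AY s) = (fst AY \<in> snd AY \<and> stk_ok G (snd AY) s)"

lemma rstep_good:
  assumes wf: "wf_ig G" and r: "rstep (annot G) x r" and g: "good G x"
  shows "\<forall>y\<in>set r. good G y"
  using r unfolding rstep_def prods_annot
proof (elim disjE exE conjE)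
  fix A B C z assume "BinP A B C \<in> annot_prods G" "x = NT A z" "r = [NT B z, NT C z]"
  then show ?thesis using g unfolding annot_prods_def by auto
next
  fix A B f z assume "PushP A B f \<in> annot_prods G" "x = NT A z" "r = [NT B (f # z)]"
  then show ?thesis using g unfolding annot_prods_def by auto
next
  fix A f B z assume "PopP A f B \<in> annot_prods G" "x = NT A (f # z)" "r = [NT B z]"
  then show ?thesis using g unfolding annot_prods_def by auto
next
  fix A w z assume a: "TermP A w \<in> annot_prods G" "x = NT A z" "r = map Tm w"
  then obtain A0 X where "TermP A0 w \<in> prods G" unfolding annot_prods_def by auto
  then have "set w \<subseteq> tms G" using wf_prod[OF wf] by (force simp: prod_ok_def)
  then show ?thesis using a by auto
qed

lemma derives_good:
  assumes wf: "wf_ig G"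
  shows "derives (annot G) u v \<Longrightarrow> \<forall>x\<in>set u. good G x \<Longrightarrow> \<forall>x\<in>set v. good G x"
  unfolding derives_def
proof (induct rule: rtranclp_induct)
  case base then show ?case by simp
next
  case (step y v)
  from step(2) obtain p x q r where "rstep (annot G) x r" "y = p @ x # q" "v = p @ r @ q"
    unfolding step_iff by blast
  then show ?case using step(3)[OF step(4)] rstep_good[OF wf] by auto
qed

lemma good_productive:
  assumes wf: "wf_ig G" and g: "\<forall>x\<in>set u. good G x"
  shows "\<exists>w. set w \<subseteq> tms G \<and> derives (annot G) u (map Tm w)"
proof -
  have "\<forall>x\<in>set u. \<exists>u'. derives (annot G) [x] u' \<and> over (annot G) {} u'"
  proof
    fix x assume x: "x \<in> set u"
    show "\<exists>u'. derives (annot G) [x] u' \<and> over (annot G) {} u'"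
    proof (cases x)
      case (Tm a) then show ?thesis using g x by (intro exI[of _ "[x]"]) (auto simp: over_def)
    next
      case (NT AY s)
      obtain A Y where "AY = (A, Y)" by (cases AY)
      then show ?thesis using g x NT productive[OF wf] by auto
    qed
  qed
  then obtain u' where "derives (annot G) u u'" "over (annot G) {} u'" using comb by blast
  then show ?thesis using over_empty[of "annot G" u'] by auto
qed


lemma derives_ctx:
  "derives G [x] (P @ [y] @ Q) \<Longrightarrow> derives G [y] (P' @ [z] @ Q') \<Longrightarrow>
   derives G [x] ((P @ P') @ [z] @ (Q' @ Q))"
proof -
  assume a: "derives G [x] (P @ [y] @ Q)" and b: "derives G [y] (P' @ [z] @ Q')"
  have "derives G (P @ [y] @ Q) (P @ (P' @ [z] @ Q') @ Q)"
    using derives_append[OF derives_refl derives_append[OF b derives_refl]] .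
  then show ?thesis using a derives_trans by fastforce
qed

lemma phi1_eq: "phi1 G \<alpha> \<beta> (f, X) = El (\<beta> f) (act G [f] X) (Mfx G f X) (\<alpha> f) X"
  by (simp add: phi1_def)

lemma phi_not_One: "xs \<noteq> [] \<Longrightarrow> phi G \<alpha> \<beta> xs \<noteq> One"
proof (cases xs)
  case (Cons x xs')
  obtain f X where x: "x = (f, X)" by (cases x)
  show ?thesis using Cons x by (cases "phi G \<alpha> \<beta> xs'") (auto simp: phi1_eq)
qed simp

lemma chain:
  assumes stk_used: "\<forall>f \<in> stk G. \<exists>A B. PushP A B f \<in> prods G"
    and alpha_beta: "\<forall>A B f. PushP A B f \<in> prods G \<longrightarrow> A = \<alpha> f \<and> B = \<beta> f"
  shows "set ze \<subseteq> stk G \<times> Pow (nts G) \<Longrightarrow> ze \<noteq> [] \<Longrightarrow> phi G \<alpha> \<beta> ze = El B' Y' M' A' X' \<Longrightarrow>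
    A' \<in> X' \<Longrightarrow> B' \<in> Y' \<Longrightarrow>
    \<exists>P Q. derives (annot G) [NT (A', X') t] (P @ [NT (B', Y') (ze @ t)] @ Q)"
proof (induct ze arbitrary: B' Y' M' A' X')
  case Nil then show ?case by simp
next
  case (Cons x xs)
  obtain f X0 where x: "x = (f, X0)" by (cases x)
  have fs: "f \<in> stk G" and X0n: "X0 \<subseteq> nts G" using Cons.prems(1) x by auto
  have pp: "PushP (\<alpha> f) (\<beta> f) f \<in> prods G" using stk_used alpha_beta fs by blast
  have push: "\<And>s. \<alpha> f \<in> X0 \<Longrightarrow> \<beta> f \<in> act G [f] X0 \<Longrightarrow>
      derives (annot G) [NT (\<alpha> f, X0) s] [NT (\<beta> f, act G [f] X0) ((f, X0) # s)]"
  proof -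
    fix s assume a: "\<alpha> f \<in> X0" "\<beta> f \<in> act G [f] X0"
    have "PushP (\<alpha> f, X0) (\<beta> f, act G [f] X0) (f, X0) \<in> annot_prods G"
      using pp X0n a unfolding annot_prods_def by blast
    then have "rstep (annot G) (NT (\<alpha> f, X0) s) [NT (\<beta> f, act G [f] X0) ((f, X0) # s)]"
      by (auto simp: rstep_def)
    then show "derives (annot G) [NT (\<alpha> f, X0) s] [NT (\<beta> f, act G [f] X0) ((f, X0) # s)]"
      by (rule derives_rstep)
  qed
  show ?case
  proof (cases "xs = []")
    case True
    then have "B' = \<beta> f" "Y' = act G [f] X0" "A' = \<alpha> f" "X' = X0"
      using Cons.prems(3) x by (auto simp: phi1_eq)
    then show ?thesis using push[of t] Cons.prems(4,5) x True
      by (intro exI[of _ "[]"]) simp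
  next
    case False
    then have ne: "phi G \<alpha> \<beta> xs \<noteq> One" by (rule phi_not_One)
    show ?thesis
    proof (cases "phi G \<alpha> \<beta> xs")
      case One then show ?thesis using ne by simp
    next
      case Zero then show ?thesis using Cons.prems(3) x by (simp add: phi1_eq)
    next
      case (El B1 Y1 M1 A1 X1)
      then have c: "X0 = Y1" "RX G X0 B1 (\<alpha> f)" and e: "B' = \<beta> f" "Y' = act G [f] X0"
        "A' = A1" "X' = X1"
        using Cons.prems(3) x by (auto simp: phi1_eq split: if_splits)
      from c(2) have B1: "B1 \<in> X0" and af: "\<alpha> f \<in> X0" and
        "\<exists>u v. derives (annot G) [NT (B1, X0) []] (u @ [NT (\<alpha> f, X0) []] @ v)"
        unfolding RX_def by auto
      then obtain u v where uv: "derives (annot G) [NT (B1, X0) []] (u @ [NT (\<alpha> f, X0) []] @ v)"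
        by blast
      have IH: "\<exists>P Q. derives (annot G) [NT (A1, X1) t] (P @ [NT (B1, Y1) (xs @ t)] @ Q)"
        using Cons.hyps[OF _ False El] Cons.prems(1,4) e B1 c(1) by auto
      then obtain P Q where PQ: "derives (annot G) [NT (A1, X1) t] (P @ [NT (B1, X0) (xs @ t)] @ Q)"
        using c(1) by blast
      have d2: "derives (annot G) [NT (B1, X0) (xs @ t)]
          (map (apps (xs @ t)) u @ [NT (\<alpha> f, X0) (xs @ t)] @ map (apps (xs @ t)) v)"
        using derives_apps[OF uv, of "xs @ t"] by simp
      have d3: "derives (annot G) [NT (\<alpha> f, X0) (xs @ t)] ([] @ [NT (\<beta> f, act G [f] X0) ((f, X0) # xs @ t)] @ [])"
        using push[OF af] Cons.prems(5) e by simp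
      from derives_ctx[OF derives_ctx[OF PQ d2] d3] show ?thesis using e x
        by (intro exI[of _ "P @ map (apps (xs @ t)) u"] exI[of _ "map (apps (xs @ t)) v @ Q"]) simp
    qed
  qed
qed


theorem mainTheorem13:
  fixes G :: "('n,'t,'i) ig"
    and \<alpha> \<beta> :: "'i \<Rightarrow> 'n"
    and e :: "'n mon"
    and B A :: 'n and X :: "'n set" and M :: "'n \<Rightarrow> 'n \<Rightarrow> bool"
    and zbar ze :: "('i \<times> 'n set) list"
  assumes wf: "wf_ig G"
    and useful: "start G \<in> Useful G"
    and stk_used: "\<forall>f \<in> stk G. \<exists>A B. PushP A B f \<in> prods G"
    and alpha_beta: "\<forall>A B f. PushP A B f \<in> prods G \<longrightarrow> A = \<alpha> f \<and> B = \<beta> f"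
    and e_def: "e = El B X M A X"
    and idem: "mmult G e e = e"
    and e_ne: "e \<notin> {Zero, One}"
    and reach: "reachable (annot G) (B, X) zbar"
    and ze_in: "set ze \<subseteq> stk G \<times> Pow (nts G)"
    and phi_ze: "phi G \<alpha> \<beta> ze = e"
  shows "Lempty (annot G) [NT (B, X) (ze @ zbar)]
           \<subseteq> downclose (Lempty (annot G) [NT (B, X) zbar])"
proof
  fix w assume "w \<in> Lempty (annot G) [NT (B, X) (ze @ zbar)]"
  then have w: "set w \<subseteq> tms G" "derives (annot G) [NT (B, X) (ze @ zbar)] (map Tm w)"
    by (auto simp: Lempty_def)
  have rx: "RX G X B A"
  proof (rule ccontr)
    assume "\<not> RX G X B A"
    then have "mmult G e e = Zero" using e_def by simp
    then show False using idem e_ne by simp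
  qed
  then have BX: "B \<in> X" and AX: "A \<in> X" and
    "\<exists>u v. derives (annot G) [NT (B, X) []] (u @ [NT (A, X) []] @ v)"
    unfolding RX_def by auto
  then obtain u v where uv: "derives (annot G) [NT (B, X) []] (u @ [NT (A, X) []] @ v)" by blast
  have zne: "ze \<noteq> []" using phi_ze e_ne by auto
  obtain P Q where PQ: "derives (annot G) [NT (A, X) zbar] (P @ [NT (B, X) (ze @ zbar)] @ Q)"
    using chain[OF stk_used alpha_beta ze_in zne phi_ze[unfolded e_def] AX BX] by blast
  have d1: "derives (annot G) [NT (B, X) zbar]
      (map (apps zbar) u @ [NT (A, X) zbar] @ map (apps zbar) v)"
    using derives_apps[OF uv, of zbar] by simp
  define L where "L = map (apps zbar) u @ P"
  define R where "R = Q @ map (apps zbar) v"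
  have d: "derives (annot G) [NT (B, X) zbar] (L @ [NT (B, X) (ze @ zbar)] @ R)"
    using derives_ctx[OF d1 PQ] unfolding L_def R_def .
  from reach obtain U where U: "derives (annot G) [NT (start (annot G)) []] U" "NT (B, X) zbar \<in> set U"
    unfolding reachable_def by blast
  then obtain p q where pq: "U = p @ NT (B, X) zbar # q" by (meson split_list)
  have "derives (annot G) (p @ [NT (B, X) zbar] @ q) (p @ (L @ [NT (B, X) (ze @ zbar)] @ R) @ q)"
    using derives_append[OF derives_refl derives_append[OF d derives_refl]] .
  then have "derives (annot G) [NT (start (annot G)) []] (p @ (L @ [NT (B, X) (ze @ zbar)] @ R) @ q)"
    using U(1) pq derives_trans by fastforce
  moreover have "\<forall>x\<in>set [NT (start (annot G)) []]. good G x" using useful by simp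
  ultimately have g: "\<forall>x\<in>set (p @ (L @ [NT (B, X) (ze @ zbar)] @ R) @ q). good G x"
    using derives_good[OF wf] by blast
  obtain w1 where w1: "set w1 \<subseteq> tms G" "derives (annot G) L (map Tm w1)"
    using good_productive[OF wf, of L] g by auto
  obtain w2 where w2: "set w2 \<subseteq> tms G" "derives (annot G) R (map Tm w2)"
    using good_productive[OF wf, of R] g by auto
  have "derives (annot G) (L @ [NT (B, X) (ze @ zbar)] @ R) (map Tm w1 @ map Tm w @ map Tm w2)"
    using derives_append[OF w1(2) derives_append[OF w(2) w2(2)]] .
  then have "derives (annot G) [NT (B, X) zbar] (map Tm (w1 @ w @ w2))"
    using d derives_trans by fastforce
  then have "w1 @ w @ w2 \<in> Lempty (annot G) [NT (B, X) zbar]"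
    using w(1) w1(1) w2(1) by (auto simp: Lempty_def)
  moreover have "subseq w (w1 @ w @ w2)"
    by (rule subseq_drop_many, rule subseq_rev_drop_many) simp
  ultimately show "w \<in> downclose (Lempty (annot G) [NT (B, X) zbar])"
    unfolding downclose_def by blast
qed


end
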